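(* Let $X\sim\mu=p^{\mathbb{Z}^d}$, $Y\sim\nu=q^{\mathbb{Z}^d}$ and let $\phi:X\to Y$ be a finitary homomorphism. Let $n,N\in\mathbb{N}$ with $N\ge2n+1$ and let $\hat\phi^n:A^{\mathbb{T}_N^d}\to(B\cup\{*\})^{\mathbb{T}_N^d}$ be the map of the $(\mathbb{T}_N^d,n)$-modeling of $\phi$. Then for every $\hat x\in A^{\mathbb{T}_N^d}$, \[\mu([\hat x])\le\nu([\hat\phi^n(\hat x)]).\]
   Context: $A,B$ are finite alphabets, $p,q$ probability vectors on $A,B$, $\mu=p^{\mathbb{Z}^d}$, $\nu=q^{\mathbb{Z}^d}$. A homomorphism $\phi:X\to Y$ is a measurable shift-commuting map $A^{\mathbb{Z}^d}\to B^{\mathbb{Z}^d}$ with $\phi_*\mu=\nu$. Its coding radius is $R_\phi(x)=\min\{n\in\mathbb{N}\cup\{\infty\}:\text{for }\mu\text{-a.e. }a,\ a|_{[-n,n]^d}=x|_{[-n,n]^d}\Rightarrow\phi(a)_0=\phi(x)_0\}$; $\phi$ is finitary if $R_\phi<\infty$ a.s. Let $*\notin B$. For $n\in\mathbb{N}$ define $\phi^n_0(x)=\phi(x)_0$ if $R_\phi(x)\le n$ and $\phi^n_0(x)=*$ otherwise; up to a $\mu$-null set, $\phi^n_0(x)$ is a function of $x|_{[-n,n]^d}$. Let $\mathbb{T}_N^d=\mathbb{Z}^d/(N\mathbb{Z})^d$; for a configuration $\hat x$ on $\mathbb{T}_N^d$ and $u\in\mathbb{Z}^d$ write $\hat x_u$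 for $\hat x_{u\bmod N}$. For $N\ge 2n+1$, $\hat\phi^n(\hat x)_u$ is the value of $\phi^n_0$ evaluated at the $N$-periodic extension of $T_{-u}\hat x$, where $(T_{-u}\hat x)_v=\hat x_{v+u}$. Cylinder sets: for $\hat x\in A^{\mathbb{T}_N^d}$, $[\hat x]=\{x\in A^{\mathbb{Z}^d}:x_u=\hat x_u\ \forall u\in[1,N]^d\}$ (so $\mu([\hat x])=\prod_{u\in\mathbb{T}_N^d}p(\hat x_u)$); for $\hat y\in(B\cup\{*\})^{\mathbb{T}_N^d}$, $[\hat y]=\{y\in B^{\mathbb{Z}^d}:\hat y_u\in\{*,y_u\}\ \forall u\in[1,N]^d\}$. *)

theory Defs
  imports "HOL-Probability.Probability"
begin

text \<open>Sites of Z^d are functions 'd \<Rightarrow> int for a finite index type 'd (d = CARD('d)).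
Configurations are functions from sites to the alphabet.  The symbol * is None.\<close>

definition bern :: "'a pmf \<Rightarrow> (('d::finite \<Rightarrow> int) \<Rightarrow> 'a) measure" where
  "bern p = PiM UNIV (\<lambda>_. measure_pmf p)"

definition shift :: "('d \<Rightarrow> int) \<Rightarrow> (('d \<Rightarrow> int) \<Rightarrow> 'a) \<Rightarrow> (('d \<Rightarrow> int) \<Rightarrow> 'a)" where
  "shift u x = (\<lambda>v. x (\<lambda>i. v i + u i))"

definition origin :: "'d \<Rightarrow> int" where "origin = (\<lambda>_. 0)"

definition box :: "nat \<Rightarrow> ('d::finite \<Rightarrow> int) set" where
  "box n = {v. \<forall>i. \<bar>v i\<bar> \<le> int n}"

definition homomorphism ::
  "'a pmf \<Rightarrow> 'b pmf \<Rightarrow> ((('d::finite \<Rightarrow> int) \<Rightarrow> 'a) \<Rightarrow> (('d \<Rightarrow> int) \<Rightarrow> 'b)) \<Rightarrow> bool" where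
  "homomorphism p q \<phi> \<longleftrightarrow> \<phi> \<in> bern p \<rightarrow>\<^sub>M bern q \<and>
     (\<forall>u x. \<phi> (shift u x) = shift u (\<phi> x)) \<and> distr (bern p) (bern q) \<phi> = bern q"

definition coding_radius ::
  "'a pmf \<Rightarrow> ((('d::finite \<Rightarrow> int) \<Rightarrow> 'a) \<Rightarrow> (('d \<Rightarrow> int) \<Rightarrow> 'b)) \<Rightarrow> (('d \<Rightarrow> int) \<Rightarrow> 'a) \<Rightarrow> enat" where
  "coding_radius p \<phi> x =
    (let P = (\<lambda>n. AE a in bern p. (\<forall>v\<in>box n. a v = x v) \<longrightarrow> \<phi> a origin = \<phi> x origin)
     in if \<exists>n. P n then enat (LEAST n. P n) else \<infinity>)"

definition finitary ::
  "'a pmf \<Rightarrow> ((('d::finite \<Rightarrow> int) \<Rightarrow> 'a) \<Rightarrow> (('d \<Rightarrow> int) \<Rightarrow> 'b)) \<Rightarrow> bool" where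
  "finitary p \<phi> \<longleftrightarrow> (AE x in bern p. coding_radius p \<phi> x < \<infinity>)"

definition phi_n0 ::
  "'a pmf \<Rightarrow> ((('d::finite \<Rightarrow> int) \<Rightarrow> 'a) \<Rightarrow> (('d \<Rightarrow> int) \<Rightarrow> 'b)) \<Rightarrow> nat \<Rightarrow> (('d \<Rightarrow> int) \<Rightarrow> 'a) \<Rightarrow> 'b option" where
  "phi_n0 p \<phi> n x = (if coding_radius p \<phi> x \<le> enat n then Some (\<phi> x origin) else None)"

text \<open>Torus T_N^d: a configuration xh on the torus is given by its values on
representatives {0..N-1}^d; xh_u is xh evaluated at u mod N.\<close>
definition tor :: "nat \<Rightarrow> ('d \<Rightarrow> int) \<Rightarrow> ('d \<Rightarrow> int)" where
  "tor N u = (\<lambda>i. u i mod int N)"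

text \<open>The (T_N^d,n)-modeling map: the value at u is the (a.e. unique) value of the
function phi^n_0 of the window x|[-n,n]^d on the window of the N-periodic extension of T_{-u} xh.\<close>
definition phi_hat ::
  "'a pmf \<Rightarrow> ((('d::finite \<Rightarrow> int) \<Rightarrow> 'a) \<Rightarrow> (('d \<Rightarrow> int) \<Rightarrow> 'b)) \<Rightarrow> nat \<Rightarrow> nat
     \<Rightarrow> (('d \<Rightarrow> int) \<Rightarrow> 'a) \<Rightarrow> (('d \<Rightarrow> int) \<Rightarrow> 'b option)" where
  "phi_hat p \<phi> n N xh = (\<lambda>u. THE c. AE a in bern p.
       (\<forall>v\<in>box n. a v = xh (tor N (\<lambda>i. v i + u i))) \<longrightarrow> phi_n0 p \<phi> n a = c)"

definition cube :: "nat \<Rightarrow> ('d::finite \<Rightarrow> int) set" where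
  "cube N = {u. \<forall>i. 1 \<le> u i \<and> u i \<le> int N}"

definition cylA :: "nat \<Rightarrow> (('d::finite \<Rightarrow> int) \<Rightarrow> 'a) \<Rightarrow> (('d \<Rightarrow> int) \<Rightarrow> 'a) set" where
  "cylA N xh = {x. \<forall>u\<in>cube N. x u = xh (tor N u)}"

definition cylB :: "nat \<Rightarrow> (('d::finite \<Rightarrow> int) \<Rightarrow> 'b option) \<Rightarrow> (('d \<Rightarrow> int) \<Rightarrow> 'b) set" where
  "cylB N yh = {y. \<forall>u\<in>cube N. yh (tor N u) \<in> {None, Some (y u)}}"

end

theory Submission
  imports Defs
begin

definition cyl :: "('s set) \<Rightarrow> ('s \<Rightarrow> 'a set) \<Rightarrow> ('s \<Rightarrow> 'a) set" where
  "cyl F S = {x. \<forall>v\<in>F. x v \<in> S v}"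

lemma space_bern[simp]: "space (bern p) = UNIV"
  by (auto simp: bern_def space_PiM)

lemma sets_bern: "sets (bern p) = sets (PiM UNIV (\<lambda>_. measure_pmf p))"
  by (simp add: bern_def)

lemma prob_bern: "prob_space (bern p)"
  unfolding bern_def by (rule prob_space_PiM) (simp add: prob_space_measure_pmf)

lemma cyl_emb: "cyl F S = prod_emb UNIV (\<lambda>_. measure_pmf p) F (PiE F S)"
  by (auto simp: prod_emb_def cyl_def space_PiM)

lemma cyl_sets: "finite F \<Longrightarrow> cyl F S \<in> sets (bern p)"
  unfolding bern_def cyl_emb[of F S p]
  by (rule sets_PiM_I) auto

lemma cyl_measure: "finite F \<Longrightarrow> measure (bern p) (cyl F S) = (\<Prod>v\<in>F. measure_pmf.prob p (S v))"
proof -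
  assume F: "finite F"
  have "emeasure (bern p) (cyl F S) = (\<Prod>v\<in>F. emeasure (measure_pmf p) (S v))"
    unfolding bern_def cyl_emb[of F S p]
    by (rule emeasure_PiM_emb) (auto simp: F prob_space_measure_pmf)
  then show ?thesis
    unfolding finite_measure.emeasure_eq_measure[OF prob_space.finite_measure[OF prob_bern]] measure_pmf.emeasure_eq_measure
    by (simp add: prod_ennreal prod_nonneg)
qed


lemma shift_meas: "Defs.shift u \<in> bern p \<rightarrow>\<^sub>M bern p"
  unfolding bern_def shift_def
  by (rule measurable_PiM_single') auto

lemma shift_distr: "distr (bern p) (bern p) (Defs.shift (u::'d::finite \<Rightarrow> int)) = bern p"
proof -
  have inj: "inj_on (\<lambda>v::'d\<Rightarrow>int. \<lambda>i. v i + u i) UNIV"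
    by (auto simp: inj_on_def fun_eq_iff)
  have "distr (PiM UNIV (\<lambda>_. measure_pmf p)) (PiM UNIV (\<lambda>i. (\<lambda>_. measure_pmf p) ((\<lambda>v::'d\<Rightarrow>int. \<lambda>i. v i + u i) i)))
     (\<lambda>\<omega>. \<lambda>n\<in>UNIV. \<omega> ((\<lambda>v. \<lambda>i. v i + u i) n)) = PiM UNIV (\<lambda>i. (\<lambda>_. measure_pmf p) ((\<lambda>v::'d\<Rightarrow>int. \<lambda>i. v i + u i) i))"
    by (rule distr_PiM_reindex) (auto simp: inj prob_space_measure_pmf)
  then show ?thesis by (simp add: bern_def shift_def[abs_def] restrict_def)
qed

lemma AE_shift: "AE a in bern p. P a \<Longrightarrow> AE x in bern p. P (Defs.shift (u::'d::finite \<Rightarrow> int) x)"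
proof -
  assume "AE a in bern p. P a"
  then have "AE a in distr (bern p) (bern p) (Defs.shift u). P a" unfolding shift_distr .
  then show ?thesis by (rule AE_distrD[OF shift_meas])
qed

definition blk :: "int \<Rightarrow> int \<Rightarrow> nat \<Rightarrow> ('d::finite \<Rightarrow> int) set" where
  "blk lo hi N = {z. \<forall>i. lo * int N + 1 \<le> z i \<and> z i \<le> hi * int N}"

lemma blk_PiE: "blk lo hi N = PiE UNIV (\<lambda>_. {lo * int N + 1..hi * int N})"
  by (auto simp: blk_def PiE_def extensional_def)

lemma cube_PiE: "cube N = PiE UNIV (\<lambda>_. {1..int N})"
  by (auto simp: cube_def PiE_def extensional_def)

lemma finite_blk[simp]: "finite (blk lo hi N)"
  by (simp add: blk_PiE finite_PiE)

lemma finite_cube[simp]: "finite (cube N)"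
  by (simp add: cube_PiE finite_PiE)

lemma box_PiE: "box n = PiE UNIV (\<lambda>_. {-int n..int n})"
  by (auto simp: box_def PiE_def Pi_def extensional_def abs_le_iff; metis minus_le_iff)

lemma finite_box[simp]: "finite (box n)"
  by (simp add: box_PiE finite_PiE)

lemma int_blk_decomp:
  fixes z lo hi :: int and N :: nat
  assumes "N > 0" "lo * int N + 1 \<le> z" "z \<le> hi * int N"
  shows "lo \<le> (z - 1) div int N \<and> (z - 1) div int N < hi \<and> 1 \<le> (z - 1) mod int N + 1
     \<and> (z - 1) mod int N + 1 \<le> int N \<and> z = int N * ((z - 1) div int N) + ((z - 1) mod int N + 1)"
proof -
  have N: "int N > 0" using assms by simp
  have "(lo * int N) div int N \<le> (z - 1) div int N"
    using assms by (intro zdiv_mono1) auto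
  then have a: "lo \<le> (z - 1) div int N" using N by simp
  have "(z - 1) div int N * int N \<le> z - 1"
    using N by (metis minus_mod_eq_div_mult diff_le_eq le_add_same_cancel1 pos_mod_sign)
  then have "(z - 1) div int N * int N < hi * int N" using assms by linarith
  then have b: "(z - 1) div int N < hi" using N mult_right_less_imp_less by fastforce
  have m1: "(z - 1) mod int N < int N" "0 \<le> (z - 1) mod int N" using N by simp_all
  have c: "(z - 1) mod int N + 1 \<le> int N" using m1 by linarith
  have d: "z = int N * ((z - 1) div int N) + ((z - 1) mod int N + 1)"
    using div_mult_mod_eq[of "z - 1" "int N"] by (simp add: algebra_simps)
  show ?thesis using a b c d m1 by linarith
qed

lemma int_blk_comp:
  fixes k w lo hi :: int and N :: nat
  assumes "lo \<le> k" "k < hi" "1 \<le> w" "w \<le> int N"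
  shows "lo * int N + 1 \<le> int N * k + w \<and> int N * k + w \<le> hi * int N"
proof -
  have 1: "lo * int N \<le> k * int N" using assms mult_right_mono[of lo k "int N"] by simp
  have 2: "(k + 1) * int N \<le> hi * int N" using assms mult_right_mono[of "k+1" hi "int N"] by simp
  have 3: "(k+1)*int N = int N * k + int N" "k * int N = int N * k" by (simp_all add: algebra_simps)
  show ?thesis using assms 1 2 3 by (smt (verit))
qed

lemma int_blk_inj:
  fixes k w k' w' :: int and N :: nat
  assumes "1 \<le> w" "w \<le> int N" "1 \<le> w'" "w' \<le> int N" "int N * k + w = int N * k' + w'"
  shows "k = k' \<and> w = w'"
proof -
  have N: "int N > 0" using assms by simp
  have "(int N * k + (w - 1)) div int N = k" using assms N by simp
  moreover have "(int N * k' + (w' - 1)) div int N = k'" using assms N by simp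
  ultimately have "k = k'" using assms by (metis add_diff_eq)
  then show ?thesis using assms by simp
qed

lemma blk_image:
  assumes "N > 0"
  shows "blk lo hi N = (\<lambda>(k,w). \<lambda>i::'d::finite. int N * k i + w i) ` (PiE UNIV (\<lambda>_. {lo..<hi}) \<times> cube N)"
proof (intro set_eqI iffI)
  fix z :: "'d \<Rightarrow> int" assume z: "z \<in> blk lo hi N"
  let ?k = "\<lambda>i. (z i - 1) div int N" and ?w = "\<lambda>i. (z i - 1) mod int N + 1"
  have H: "\<forall>i. lo \<le> ?k i \<and> ?k i < hi \<and> 1 \<le> ?w i \<and> ?w i \<le> int N \<and> z i = int N * ?k i + ?w i"
    using z int_blk_decomp[OF assms] by (auto simp: blk_def)
  have eq: "z = (\<lambda>i. int N * ?k i + ?w i)"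
  proof (rule ext)
    fix i show "z i = int N * ?k i + ?w i" using H by blast
  qed
  have k: "?k \<in> PiE UNIV (\<lambda>_. {lo..<hi})" using H by (simp add: PiE_def Pi_def extensional_def)
  have w: "?w \<in> cube N" using H by (simp add: cube_def)
  show "z \<in> (\<lambda>(k,w). \<lambda>i::'d::finite. int N * k i + w i) ` (PiE UNIV (\<lambda>_. {lo..<hi}) \<times> cube N)"
    by (rule image_eqI[where x="(?k, ?w)"]) (use eq k w in auto)
next
  fix z :: "'d \<Rightarrow> int" assume "z \<in> (\<lambda>(k,w). \<lambda>i::'d::finite. int N * k i + w i) ` (PiE UNIV (\<lambda>_. {lo..<hi}) \<times> cube N)"
  then obtain k w where k: "k \<in> PiE UNIV (\<lambda>_. {lo..<hi})" and w: "w \<in> cube N"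
    and zk: "z = (\<lambda>i. int N * k i + w i)" by auto
  have "lo * int N + 1 \<le> z i \<and> z i \<le> hi * int N" for i
  proof -
    have "lo \<le> k i" "k i < hi" using k by (auto simp: PiE_def Pi_def)
    moreover have "1 \<le> w i" "w i \<le> int N" using w by (auto simp: cube_def)
    ultimately show ?thesis using int_blk_comp[of lo "k i" hi "w i" N] zk by simp
  qed
  then show "z \<in> blk lo hi N" by (simp add: blk_def)
qed

lemma blk_prod:
  fixes g :: "('d::finite \<Rightarrow> int) \<Rightarrow> real"
  assumes N: "N > 0" and lohi: "lo \<le> hi"
    and per: "\<And>k w. g (\<lambda>i. int N * k i + w i) = g w"
  shows "(\<Prod>z\<in>blk lo hi N. g z) = (\<Prod>w\<in>cube N. g w) ^ (nat (hi - lo) ^ CARD('d))"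
proof -
  let ?K = "PiE (UNIV::'d set) (\<lambda>_. {lo..<hi})"
  have inj: "inj_on (\<lambda>(k,w). \<lambda>i::'d::finite. int N * k i + w i) (?K \<times> cube N)"
  proof (rule inj_onI, clarify)
    fix k w k' w' assume w: "w \<in> cube N" and w': "w' \<in> cube N"
      and e: "(\<lambda>i. int N * k i + w i) = (\<lambda>i. int N * k' i + w' i)"
    have "k i = k' i \<and> w i = w' i" for i
    proof -
      have "1 \<le> w i" "w i \<le> int N" using w by (auto simp: cube_def)
      moreover have "1 \<le> w' i" "w' i \<le> int N" using w' by (auto simp: cube_def)
      moreover have "int N * k i + w i = int N * k' i + w' i" using e by (metis)
      ultimately show ?thesis using int_blk_inj by blast
    qed
    then show "k = k' \<and> w = w'" by (simp add: fun_eq_iff)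
  qed
  have "(\<Prod>z\<in>blk lo hi N. g z) = (\<Prod>kw\<in>?K \<times> cube N. g ((\<lambda>(k,w). \<lambda>i::'d::finite. int N * k i + w i) kw))"
    unfolding blk_image[OF N] by (rule prod.reindex[OF inj, unfolded comp_def])
  also have "\<dots> = (\<Prod>k\<in>?K. \<Prod>w\<in>cube N. g (\<lambda>i. int N * k i + w i))"
    by (subst prod.cartesian_product) (simp add: split_def)
  also have "\<dots> = (\<Prod>k\<in>?K. \<Prod>w\<in>cube N. g w)" by (simp add: per)
  also have "\<dots> = (\<Prod>w\<in>cube N. g w) ^ card ?K" by simp
  also have "card ?K = nat (hi - lo) ^ CARD('d)"
    by (simp add: card_PiE)
  finally show ?thesis .
qed


lemma tor_per: "tor N (\<lambda>i. int N * k i + w i) = tor N w"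
  by (simp add: tor_def fun_eq_iff)

lemma tor_tor_add: "tor N (\<lambda>i. v i + tor N u i) = tor N (\<lambda>i. v i + u i)"
  by (simp add: tor_def fun_eq_iff mod_add_right_eq)

lemma box_mono: "m \<le> n \<Longrightarrow> box m \<subseteq> box n"
  by (auto simp: box_def) (meson of_nat_le_iff order_trans)

lemma cr_le_I:
  assumes "AE a' in bern p. (\<forall>v\<in>box n. a' v = a v) \<longrightarrow> \<phi> a' origin = \<phi> a origin"
  shows "coding_radius p \<phi> a \<le> enat n"
  unfolding coding_radius_def Let_def using assms
  by (auto intro: Least_le)

lemma cr_le_D:
  assumes "coding_radius p \<phi> a \<le> enat n"
  shows "AE a' in bern p. (\<forall>v\<in>box n. a' v = a v) \<longrightarrow> \<phi> a' origin = \<phi> a origin"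
proof -
  let ?P = "\<lambda>n. AE a' in bern p. (\<forall>v\<in>box n. a' v = a v) \<longrightarrow> \<phi> a' origin = \<phi> a origin"
  have ex: "\<exists>m. ?P m" using assms by (auto simp: coding_radius_def Let_def split: if_splits)
  then have le: "(LEAST m. ?P m) \<le> n" using assms by (simp add: coding_radius_def Let_def)
  have "?P (LEAST m. ?P m)" using ex by (rule LeastI_ex)
  then show ?thesis
  proof (rule AE_mp[OF _ AE_I2], intro impI)
    fix a' assume h: "(\<forall>v\<in>box (LEAST m. ?P m). a' v = a v) \<longrightarrow> \<phi> a' origin = \<phi> a origin"
      and ag: "\<forall>v\<in>box n. a' v = a v"
    show "\<phi> a' origin = \<phi> a origin" using h ag box_mono[OF le] by blast
  qed
qed

lemma Q_exists:
  "\<exists>c. AE a in bern p. (\<forall>v\<in>box n. a v = t v) \<longrightarrow> phi_n0 p \<phi> n a = c"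
proof (cases "\<exists>b0. AE a in bern p. (\<forall>v\<in>box n. a v = t v) \<longrightarrow> \<phi> a origin = b0")
  case True
  then obtain b0 where b0: "AE a in bern p. (\<forall>v\<in>box n. a v = t v) \<longrightarrow> \<phi> a origin = b0" by blast
  have "AE a in bern p. (\<forall>v\<in>box n. a v = t v) \<longrightarrow> phi_n0 p \<phi> n a = Some b0"
    using b0
  proof (rule AE_mp[OF _ AE_I2], intro impI)
    fix a assume h: "(\<forall>v\<in>box n. a v = t v) \<longrightarrow> \<phi> a origin = b0" and W: "\<forall>v\<in>box n. a v = t v"
    have "AE a' in bern p. (\<forall>v\<in>box n. a' v = a v) \<longrightarrow> \<phi> a' origin = \<phi> a origin"
      using b0 by eventually_elim (use h W in auto)
    then have "coding_radius p \<phi> a \<le> enat n" by (rule cr_le_I)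
    then show "phi_n0 p \<phi> n a = Some b0" using h W by (simp add: phi_n0_def)
  qed
  then show ?thesis by blast
next
  case False
  have "phi_n0 p \<phi> n a = None" if W: "\<forall>v\<in>box n. a v = t v" for a
  proof (rule ccontr)
    assume "phi_n0 p \<phi> n a \<noteq> None"
    then have "coding_radius p \<phi> a \<le> enat n" by (simp add: phi_n0_def split: if_splits)
    then have "AE a' in bern p. (\<forall>v\<in>box n. a' v = a v) \<longrightarrow> \<phi> a' origin = \<phi> a origin"
      by (rule cr_le_D)
    then have "AE a' in bern p. (\<forall>v\<in>box n. a' v = t v) \<longrightarrow> \<phi> a' origin = \<phi> a origin"
      by eventually_elim (use W in auto)
    then show False using False by blast
  qed
  then show ?thesis by (intro exI[of _ None]) auto
qed

lemma cyl_single: "cyl F (\<lambda>v. {t v}) = {a. \<forall>v\<in>F. a v = t v}"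
  by (simp add: cyl_def)

lemma Q_unique:
  assumes pos: "measure (bern p) {a. \<forall>v\<in>box n. a v = t v} > 0"
    and c1: "AE a in bern p. (\<forall>v\<in>box n. a v = t v) \<longrightarrow> phi_n0 p \<phi> n a = c1"
    and c2: "AE a in bern p. (\<forall>v\<in>box n. a v = t v) \<longrightarrow> phi_n0 p \<phi> n a = c2"
  shows "c1 = c2"
proof (rule ccontr)
  assume ne: "c1 \<noteq> c2"
  have "AE a in bern p. \<not> (\<forall>v\<in>box n. a v = t v)"
    using c1 c2 by eventually_elim (use ne in auto)
  moreover have S: "{a. \<forall>v\<in>box n. a v = t v} \<in> sets (bern p)"
    using cyl_sets[of "box n" "\<lambda>v. {t v}" p] by (simp add: cyl_single)
  ultimately have "emeasure (bern p) {a. \<forall>v\<in>box n. a v = t v} = 0"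
    by (subst (asm) AE_iff_measurable[OF S]) auto
  then show False using pos by (simp add: measure_def)
qed

lemma phi_hat_tor: "phi_hat p \<phi> n N xh (tor N u) = phi_hat p \<phi> n N xh u"
  by (simp add: phi_hat_def tor_tor_add)

lemma window_pos:
  assumes pos: "\<And>z. pmf p (xh (tor N z)) > 0"
  shows "measure (bern p) {a. \<forall>v\<in>box n. a v = xh (tor N (\<lambda>i. v i + u i))} > 0"
proof -
  have "measure (bern p) {a. \<forall>v\<in>box n. a v = xh (tor N (\<lambda>i. v i + u i))}
      = (\<Prod>v\<in>box n. measure_pmf.prob p {xh (tor N (\<lambda>i. v i + u i))})"
    using cyl_measure[of "box n" p "\<lambda>v. {xh (tor N (\<lambda>i. v i + u i))}"] by (simp add: cyl_single)
  also have "\<dots> > 0"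
    using pos by (intro prod_pos) (simp add: measure_pmf_single)
  finally show ?thesis .
qed

lemma key:
  fixes \<phi> :: "(('d::finite \<Rightarrow> int) \<Rightarrow> 'a) \<Rightarrow> (('d \<Rightarrow> int) \<Rightarrow> 'b)"
  assumes hom: "\<And>u x. \<phi> (Defs.shift u x) = Defs.shift u (\<phi> x)"
    and pos: "\<And>z. pmf p (xh (tor N z)) > 0"
  shows "AE x in bern p. (\<forall>v\<in>box n. x (\<lambda>i. v i + u i) = xh (tor N (\<lambda>i. v i + u i)))
           \<longrightarrow> phi_hat p \<phi> n N xh (tor N u) \<in> {None, Some (\<phi> x u)}"
proof -
  let ?t = "\<lambda>v. xh (tor N (\<lambda>i. v i + u i))"
  let ?Q = "\<lambda>c. AE a in bern p. (\<forall>v\<in>box n. a v = ?t v) \<longrightarrow> phi_n0 p \<phi> n a = c"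
  have ex: "\<exists>c. ?Q c" by (rule Q_exists)
  have ex1: "\<exists>!c. ?Q c"
    using ex Q_unique[OF window_pos[where p=p and xh=xh and N=N and n=n and u=u, OF pos]] by blast
  have c: "phi_hat p \<phi> n N xh (tor N u) = (THE c. ?Q c)"
    unfolding phi_hat_tor by (simp add: phi_hat_def)
  have Qc: "?Q (phi_hat p \<phi> n N xh (tor N u))"
    unfolding c by (rule theI'[OF ex1])
  show ?thesis
  proof (cases "phi_hat p \<phi> n N xh (tor N u)")
    case None
    then show ?thesis by simp
  next
    case (Some b)
    have "AE x in bern p. (\<forall>v\<in>box n. Defs.shift u x v = ?t v) \<longrightarrow> phi_n0 p \<phi> n (Defs.shift u x) = Some b"
      using Qc Some by (intro AE_shift) simp
    then show ?thesis
    proof (rule AE_mp[OF _ AE_I2], intro impI)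
      fix x assume h: "(\<forall>v\<in>box n. Defs.shift u x v = ?t v) \<longrightarrow> phi_n0 p \<phi> n (Defs.shift u x) = Some b"
        and W: "\<forall>v\<in>box n. x (\<lambda>i. v i + u i) = ?t v"
      have "phi_n0 p \<phi> n (Defs.shift u x) = Some b" using h W by (simp add: shift_def)
      then have "\<phi> (Defs.shift u x) origin = b" by (simp add: phi_n0_def split: if_splits)
      moreover have "\<phi> (Defs.shift u x) origin = Defs.shift u (\<phi> x) origin" by (simp only: hom)
      moreover have "Defs.shift u (\<phi> x) origin = \<phi> x u" by (simp add: shift_def origin_def)
      ultimately have "\<phi> x u = b" by simp
      then show "phi_hat p \<phi> n N xh (tor N u) \<in> {None, Some (\<phi> x u)}" using Some by simp
    qed
  qed
qed


lemma limit_ineq: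
  fixes a b :: real and D :: nat
  assumes a: "0 < a" and b: "0 \<le> b" and H: "\<And>M. M \<ge> 1 \<Longrightarrow> a ^ ((M + 2) ^ D) \<le> b ^ (M ^ D)"
  shows "a \<le> b"
proof -
  have "0 < a ^ ((1 + 2) ^ D)" using a by simp
  also have "\<dots> \<le> b ^ (1 ^ D)" using H[of 1] by simp
  finally have bpos: "0 < b" by simp
  let ?X = "\<lambda>M::nat. (1 + 2 / real M) ^ D * ln a"
  have lim: "?X \<longlonglongrightarrow> (1 + 0) ^ D * ln a"
    by (intro tendsto_intros)
  have XM: "?X M \<le> ln b" if M: "M \<ge> 1" for M
  proof -
    have "ln (a ^ ((M + 2) ^ D)) \<le> ln (b ^ (M ^ D))"
      using H[OF M] a bpos by simp
    then have "real ((M + 2) ^ D) * ln a \<le> real (M ^ D) * ln b" by (simp only: ln_realpow)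
    moreover have "real ((M + 2) ^ D) = (2 + real M) ^ D" "real (M ^ D) = real M ^ D" by simp_all
    ultimately have i: "(2 + real M) ^ D * ln a \<le> real M ^ D * ln b" by simp
    have Mpos: "real M > 0" using M by simp
    have "1 + 2 / real M = (2 + real M) / real M"
      using Mpos by (simp add: field_simps)
    then have "(1 + 2 / real M) ^ D = (2 + real M) ^ D / real M ^ D"
      by (simp add: power_divide)
    then have "?X M = (2 + real M) ^ D * ln a / real M ^ D" by simp
    also have "\<dots> \<le> real M ^ D * ln b / real M ^ D"
      using i Mpos by (intro divide_right_mono) auto
    also have "\<dots> = ln b" using Mpos by simp
    finally show ?thesis .
  qed
  have "(1 + 0) ^ D * ln a \<le> ln b"
    by (rule LIMSEQ_le_const2[OF lim]) (use XM in blast)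
  then have "ln a \<le> ln b" by simp
  then show ?thesis using a bpos by simp
qed


theorem lemma5:
  fixes p :: "'a::finite pmf" and q :: "'b::finite pmf"
    and \<phi> :: "(('d::finite \<Rightarrow> int) \<Rightarrow> 'a) \<Rightarrow> (('d \<Rightarrow> int) \<Rightarrow> 'b)"
    and n N :: nat and xh :: "('d \<Rightarrow> int) \<Rightarrow> 'a"
  assumes "homomorphism p q \<phi>"
    and "finitary p \<phi>"
    and "N \<ge> 2 * n + 1"
  shows "measure (bern p) (cylA N xh) \<le> measure (bern q) (cylB N (phi_hat p \<phi> n N xh))"
proof -
  define yh where "yh = phi_hat p \<phi> n N xh"
  have N: "N > 0" using assms(3) by simp
  have hom: "\<phi> \<in> bern p \<rightarrow>\<^sub>M bern q" "\<And>u x. \<phi> (Defs.shift u x) = Defs.shift u (\<phi> x)"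
    "distr (bern p) (bern q) \<phi> = bern q"
    using assms(1) by (auto simp: homomorphism_def)
  let ?gA = "\<lambda>v. pmf p (xh (tor N v))"
  let ?SB = "\<lambda>v. {c. yh (tor N v) \<in> {None, Some c}}"
  let ?gB = "\<lambda>v. measure_pmf.prob q (?SB v)"
  define a where "a = measure (bern p) (cylA N xh)"
  define b where "b = measure (bern q) (cylB N yh)"
  have cylA_eq: "cylA N xh = cyl (cube N) (\<lambda>v. {xh (tor N v)})" by (auto simp: cylA_def cyl_def)
  have cylB_eq: "cylB N yh = cyl (cube N) ?SB" by (auto simp: cylB_def cyl_def)
  have a_eq: "a = (\<Prod>w\<in>cube N. ?gA w)"
    by (simp add: a_def cylA_eq cyl_measure measure_pmf_single)
  have b_eq: "b = (\<Prod>w\<in>cube N. ?gB w)"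
    by (simp add: b_def cylB_eq cyl_measure)
  have b_nn: "0 \<le> b" by (simp add: b_def)
  have a_nn: "0 \<le> a" by (simp add: a_def)
  show ?thesis
  proof (cases "a = 0")
    case True
    then show ?thesis using b_nn by (simp add: a_def b_def yh_def)
  next
    case False
    then have apos: "0 < a" using a_nn by simp
    have nz: "?gA w \<noteq> 0" if "w \<in> cube N" for w
      using False that by (auto simp: a_eq)
    have pos: "pmf p (xh (tor N z)) > 0" for z
    proof -
      let ?w = "\<lambda>i. if tor N z i = 0 then int N else tor N z i"
      have r: "0 \<le> tor N z i \<and> tor N z i < int N" for i using N by (simp add: tor_def)
      have "?w \<in> cube N" unfolding cube_def
      proof (intro CollectI allI)
        fix i show "1 \<le> ?w i \<and> ?w i \<le> int N" using r[of i] N by auto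
      qed
      moreover have "tor N ?w = tor N z"
      proof (rule ext)
        fix i show "tor N ?w i = tor N z i"
          using r[of i] by (simp add: tor_def)
      qed
      ultimately have "?gA z \<noteq> 0" using nz by metis
      then show ?thesis using pmf_nonneg[of p] by (simp add: order_less_le)
    qed
    have ineq: "a ^ ((M + 2) ^ CARD('d)) \<le> b ^ (M ^ CARD('d))" if M: "M \<ge> 1" for M :: nat
    proof -
      define AM where "AM = cyl (blk 0 (int M + 2) N) (\<lambda>v. {xh (tor N v)})"
      define BM where "BM = cyl (blk 1 (int M + 1) N) ?SB"
      have mA: "measure (bern p) AM = a ^ ((M + 2) ^ CARD('d))"
      proof -
        have "measure (bern p) AM = (\<Prod>z\<in>blk 0 (int M + 2) N. ?gA z)"
          by (simp add: AM_def cyl_measure measure_pmf_single)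
        also have "\<dots> = (\<Prod>w\<in>cube N. ?gA w) ^ (nat (int M + 2 - 0) ^ CARD('d))"
          by (rule blk_prod[OF N]) (auto simp: tor_per)
        also have "nat (int M + 2 - 0) = M + 2" by simp
        finally show ?thesis by (simp add: a_eq)
      qed
      have mB: "measure (bern q) BM = b ^ (M ^ CARD('d))"
      proof -
        have "measure (bern q) BM = (\<Prod>z\<in>blk 1 (int M + 1) N. ?gB z)"
          by (simp add: BM_def cyl_measure)
        also have "\<dots> = (\<Prod>w\<in>cube N. ?gB w) ^ (nat (int M + 1 - 1) ^ CARD('d))"
          by (rule blk_prod[OF N]) (auto simp: tor_per)
        also have "nat (int M + 1 - 1) = M" by simp
        finally show ?thesis by (simp add: b_eq)
      qed
      have AE: "AE x in bern p. x \<in> AM \<longrightarrow> \<phi> x \<in> BM"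
      proof -
        have "AE x in bern p. \<forall>u\<in>blk 1 (int M + 1) N. x \<in> AM \<longrightarrow> \<phi> x u \<in> ?SB u"
        proof (rule AE_finite_allI[OF finite_blk])
          fix u :: "'d \<Rightarrow> int" assume u: "u \<in> blk 1 (int M + 1) N"
          have k: "AE x in bern p. (\<forall>v\<in>box n. x (\<lambda>i. v i + u i) = xh (tor N (\<lambda>i. v i + u i)))
             \<longrightarrow> phi_hat p \<phi> n N xh (tor N u) \<in> {None, Some (\<phi> x u)}"
            by (rule key[where p=p and xh=xh and N=N and \<phi>=\<phi>, OF hom(2) pos])
          show "AE x in bern p. x \<in> AM \<longrightarrow> \<phi> x u \<in> ?SB u"
            using k
          proof (rule AE_mp[OF _ AE_I2], intro impI)
            fix x assume kx: "(\<forall>v\<in>box n. x (\<lambda>i. v i + u i) = xh (tor N (\<lambda>i. v i + u i)))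
             \<longrightarrow> phi_hat p \<phi> n N xh (tor N u) \<in> {None, Some (\<phi> x u)}"
              and xA: "x \<in> AM"
            have "\<forall>v\<in>box n. x (\<lambda>i. v i + u i) = xh (tor N (\<lambda>i. v i + u i))"
            proof
              fix v :: "'d \<Rightarrow> int" assume v: "v \<in> box n"
              have "(\<lambda>i. v i + u i) \<in> blk 0 (int M + 2) N"
                unfolding blk_def
              proof (intro CollectI allI conjI)
                fix i
                have vi: "\<bar>v i\<bar> \<le> int n" using v by (simp add: box_def)
                have ui: "1 * int N + 1 \<le> u i" "u i \<le> (int M + 1) * int N" using u by (auto simp: blk_def)
                have e: "(int M + 2) * int N = (int M + 1) * int N + int N" by (simp add: algebra_simps)
                have nN: "2 * int n + 1 \<le> int N" using assms(3) by simp
                show "0 * int N + 1 \<le> v i + u i" using vi ui nN by simp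
                show "v i + u i \<le> (int M + 2) * int N" using vi ui nN e by linarith
              qed
              then show "x (\<lambda>i. v i + u i) = xh (tor N (\<lambda>i. v i + u i))"
                using xA by (simp add: AM_def cyl_def)
            qed
            then show "\<phi> x u \<in> ?SB u" using kx by (simp add: yh_def)
          qed
        qed
        then show ?thesis by eventually_elim (auto simp: BM_def cyl_def)
      qed
      have BMs: "BM \<in> sets (bern q)" by (simp add: BM_def cyl_sets)
      have pre: "\<phi> -` BM \<inter> space (bern p) \<in> sets (bern p)"
        by (rule measurable_sets[OF hom(1) BMs])
      have "emeasure (bern p) AM \<le> emeasure (bern p) (\<phi> -` BM \<inter> space (bern p))"
        by (rule emeasure_mono_AE[OF _ pre]) (use AE in auto)
      then have "measure (bern p) AM \<le> measure (bern p) (\<phi> -` BM \<inter> space (bern p))"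
        by (simp add: finite_measure.emeasure_eq_measure[OF prob_space.finite_measure[OF prob_bern]])
      also have "\<dots> = measure (distr (bern p) (bern q) \<phi>) BM"
        by (simp add: measure_distr[OF hom(1) BMs])
      also have "\<dots> = measure (bern q) BM" using hom(3) by simp
      finally show ?thesis using mA mB by simp
    qed
    have "a \<le> b" by (rule limit_ineq[OF apos b_nn ineq])
    then show ?thesis by (simp add: a_def b_def yh_def)
  qed
qed

end
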